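(* Let $X\subseteq\Omega$ and $D\in\mathcal{I}^{\mathbf{c}}(X)$, and let $Y=\min(D)\cup(X-D)$. Then $\min(D)\subseteq\max(Y)$, and $$\pi(X,D)=\pi(Y,\min(D))=\sum_{I\in\mathcal{I}(Y)}(-1)^{|I\cap\min(D)|}\Big(\prod_{i\in I-\max(I)}\tau_{(i)}\Big)\Big(\prod_{i\in\max(I)-\min(D)}\eta_{(i)}\Big)x^{|I|}.$$
   Context: $\Omega$ is a finite set and $\mathbf{P}=(\Omega,\preccurlyeq_{\mathbf{P}})$ a poset. For $Y\subseteq\Omega$: $\max(Y)$, $\min(Y)$ are the maximal, minimal elements of $Y$ w.r.t. $\preccurlyeq_{\mathbf{P}}$; $\mathcal{I}(Y)$ is the set of ideals (down-closed subsets) of the subposet $Y$ with the induced order; $\mathcal{I}^{\mathbf{c}}(Y)$ is the set of ideals of the dual of that subposet (i.e., up-closed subsets of $Y$). $K$ is a commutative ring and $\tau,\eta\in K^{\Omega}$ are fixed. For $D,I\subseteq\Omega$, $\varphi(D,I)=(-1)^{|I\cap D|}\big(\prod_{i\in I-\max(I)}\tau_{(i)}\big)\big(\prod_{i\in\max(I)-D}\eta_{(i)}\big)$ if $I\cap D\subseteq\max(I)$, and $\varphi(D,I)=0$ otherwise. For $Y\subseteq\Omega$ and $D\subseteq Y$, $\pi(Y,D)=\sum_{I\in\mathcal{I}(Y)}\varphi(D,I)x^{|I|}\in K[x]$. *)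

theory Defs
  imports "HOL-Computational_Algebra.Polynomial"
begin

definition poset_on :: "'a set \<Rightarrow> ('a \<Rightarrow> 'a \<Rightarrow> bool) \<Rightarrow> bool" where
  "poset_on \<Omega> le \<longleftrightarrow>
     (\<forall>x\<in>\<Omega>. le x x) \<and>
     (\<forall>x\<in>\<Omega>. \<forall>y\<in>\<Omega>. le x y \<and> le y x \<longrightarrow> x = y) \<and>
     (\<forall>x\<in>\<Omega>. \<forall>y\<in>\<Omega>. \<forall>z\<in>\<Omega>. le x y \<and> le y z \<longrightarrow> le x z)"

definition maxs :: "('a \<Rightarrow> 'a \<Rightarrow> bool) \<Rightarrow> 'a set \<Rightarrow> 'a set" where
  "maxs le Y = {y \<in> Y. \<forall>z\<in>Y. le y z \<longrightarrow> z = y}"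

definition mins :: "('a \<Rightarrow> 'a \<Rightarrow> bool) \<Rightarrow> 'a set \<Rightarrow> 'a set" where
  "mins le Y = {y \<in> Y. \<forall>z\<in>Y. le z y \<longrightarrow> z = y}"

definition ideals :: "('a \<Rightarrow> 'a \<Rightarrow> bool) \<Rightarrow> 'a set \<Rightarrow> 'a set set" where
  "ideals le Y = {I. I \<subseteq> Y \<and> (\<forall>i\<in>I. \<forall>y\<in>Y. le y i \<longrightarrow> y \<in> I)}"

text \<open>Ideals of the dual of the subposet Y, i.e. up-closed subsets of Y.\<close>
definition coideals :: "('a \<Rightarrow> 'a \<Rightarrow> bool) \<Rightarrow> 'a set \<Rightarrow> 'a set set" where
  "coideals le Y = {I. I \<subseteq> Y \<and> (\<forall>i\<in>I. \<forall>y\<in>Y. le i y \<longrightarrow> y \<in> I)}"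

definition phi :: "('a \<Rightarrow> 'a \<Rightarrow> bool) \<Rightarrow> ('a \<Rightarrow> 'k::comm_ring_1) \<Rightarrow> ('a \<Rightarrow> 'k)
                    \<Rightarrow> 'a set \<Rightarrow> 'a set \<Rightarrow> 'k" where
  "phi le \<tau> \<eta> D I =
     (if I \<inter> D \<subseteq> maxs le I then
        (-1) ^ card (I \<inter> D) * (\<Prod>i\<in>I - maxs le I. \<tau> i) * (\<Prod>i\<in>maxs le I - D. \<eta> i)
      else 0)"

definition pi_poly :: "('a \<Rightarrow> 'a \<Rightarrow> bool) \<Rightarrow> ('a \<Rightarrow> 'k::comm_ring_1) \<Rightarrow> ('a \<Rightarrow> 'k)
                    \<Rightarrow> 'a set \<Rightarrow> 'a set \<Rightarrow> 'k poly" where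
  "pi_poly le \<tau> \<eta> Y D = (\<Sum>I\<in>ideals le Y. monom (phi le \<tau> \<eta> D I) (card I))"

end

theory Submission
  imports Defs
begin

theorem theorem3p1:
  fixes \<Omega> :: "'a set" and le :: "'a \<Rightarrow> 'a \<Rightarrow> bool"
    and \<tau> \<eta> :: "'a \<Rightarrow> 'k::comm_ring_1"
    and X D :: "'a set"
  assumes "finite \<Omega>" and "poset_on \<Omega> le"
    and "X \<subseteq> \<Omega>" and "D \<in> coideals le X"
  defines "Y \<equiv> mins le D \<union> (X - D)"
  shows "mins le D \<subseteq> maxs le Y
    \<and> pi_poly le \<tau> \<eta> X D = pi_poly le \<tau> \<eta> Y (mins le D)
    \<and> pi_poly le \<tau> \<eta> Y (mins le D) =
           (\<Sum>I\<in>ideals le Y.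
              Polynomial.smult ((-1) ^ card (I \<inter> mins le D)
                 * (\<Prod>i\<in>I - maxs le I. \<tau> i) * (\<Prod>i\<in>maxs le I - mins le D. \<eta> i))
                ([:0, 1:] ^ card I))"
proof -
  have DX: "D \<subseteq> X" and Dup: "\<And>d y. d \<in> D \<Longrightarrow> y \<in> X \<Longrightarrow> le d y \<Longrightarrow> y \<in> D"
    using assms(4) unfolding coideals_def by auto
  have mD: "mins le D \<subseteq> D" unfolding mins_def by auto
  have YX: "Y \<subseteq> X" using DX mD unfolding Y_def by auto
  have YD: "Y \<inter> D = mins le D" using mD unfolding Y_def by auto
  have finX: "finite X" using assms(1,3) finite_subset by blast
  have A: "mins le D \<subseteq> maxs le Y"
  proof
    fix m assume m: "m \<in> mins le D"
    hence mD': "m \<in> D" and mmin: "\<forall>z\<in>D. le z m \<longrightarrow> z = m" unfolding mins_def by auto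
    have "m \<in> Y" using m unfolding Y_def by auto
    moreover have "\<forall>z\<in>Y. le m z \<longrightarrow> z = m"
    proof (intro ballI impI)
      fix z assume z: "z \<in> Y" "le m z"
      show "z = m"
      proof (cases "z \<in> D")
        case True
        then have "z \<in> mins le D" using z unfolding Y_def by auto
        then show ?thesis using z mD' unfolding mins_def by auto
      next
        case False
        then show ?thesis using z Dup[OF mD'] YX by auto
      qed
    qed
    ultimately show "m \<in> maxs le Y" unfolding maxs_def by auto
  qed
  have maxsub: "\<And>I. maxs le I \<subseteq> I" unfolding maxs_def by auto
  have IY: "\<And>I. I \<in> ideals le Y \<Longrightarrow> I \<subseteq> Y" unfolding ideals_def by auto
  have cond: "\<And>I. I \<in> ideals le Y \<Longrightarrow> I \<inter> mins le D \<subseteq> maxs le I"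
    using A IY unfolding maxs_def by blast
  have phiY: "\<And>I. I \<in> ideals le Y \<Longrightarrow> phi le \<tau> \<eta> (mins le D) I =
      (-1) ^ card (I \<inter> mins le D) * (\<Prod>i\<in>I - maxs le I. \<tau> i) * (\<Prod>i\<in>maxs le I - mins le D. \<eta> i)"
    using cond unfolding phi_def by auto
  have phiXY: "\<And>I. I \<in> ideals le Y \<Longrightarrow> phi le \<tau> \<eta> D I = phi le \<tau> \<eta> (mins le D) I"
  proof -
    fix I assume I: "I \<in> ideals le Y"
    have e1: "I \<inter> D = I \<inter> mins le D" using IY[OF I] YD by blast
    have e2: "maxs le I - D = maxs le I - mins le D" using IY[OF I] YD maxsub[of I] by blast
    show "phi le \<tau> \<eta> D I = phi le \<tau> \<eta> (mins le D) I" unfolding phi_def e1 e2 ..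
  qed
  have sub: "ideals le Y \<subseteq> ideals le X"
  proof
    fix I assume I: "I \<in> ideals le Y"
    have "\<forall>i\<in>I. \<forall>y\<in>X. le y i \<longrightarrow> y \<in> I"
    proof (intro ballI impI)
      fix i y assume iy: "i \<in> I" "y \<in> X" "le y i"
      have iY: "i \<in> Y" using IY[OF I] iy by auto
      show "y \<in> I"
      proof (cases "y \<in> D")
        case True
        have "i \<in> D" using Dup[OF True] iy iY YX by auto
        then have "i \<in> mins le D" using iY unfolding Y_def by auto
        then have "y = i" using True iy unfolding mins_def by auto
        then show ?thesis using iy by simp
      next
        case False
        then have "y \<in> Y" using iy unfolding Y_def by auto
        then show ?thesis using I iy unfolding ideals_def by auto
      qed
    qed
    then show "I \<in> ideals le X" using IY[OF I] YX unfolding ideals_def by auto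
  qed
  have zero: "\<And>I. I \<in> ideals le X - ideals le Y \<Longrightarrow> phi le \<tau> \<eta> D I = 0"
  proof -
    fix I assume I: "I \<in> ideals le X - ideals le Y"
    show "phi le \<tau> \<eta> D I = 0"
    proof (rule ccontr)
      assume "phi le \<tau> \<eta> D I \<noteq> 0"
      then have c: "I \<inter> D \<subseteq> maxs le I" unfolding phi_def by (auto split: if_splits)
      have IX: "I \<subseteq> X" and Idown: "\<forall>i\<in>I. \<forall>y\<in>X. le y i \<longrightarrow> y \<in> I"
        using I unfolding ideals_def by auto
      have "I \<subseteq> Y"
      proof
        fix d assume d: "d \<in> I"
        show "d \<in> Y"
        proof (cases "d \<in> D")
          case False then show ?thesis using d IX unfolding Y_def by auto
        next
          case True
          have "\<forall>w\<in>D. le w d \<longrightarrow> w = d"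
          proof (intro ballI impI)
            fix w assume w: "w \<in> D" "le w d"
            have "w \<in> I" using Idown d w DX by auto
            then have "w \<in> maxs le I" using c w by auto
            then show "w = d" using d w unfolding maxs_def by auto
          qed
          then have "d \<in> mins le D" using True unfolding mins_def by auto
          then show ?thesis unfolding Y_def by auto
        qed
      qed
      then have "I \<in> ideals le Y" using Idown YX unfolding ideals_def by auto
      then show False using I by auto
    qed
  qed
  have finI: "finite (ideals le X)"
    using finX unfolding ideals_def by (auto intro: finite_subset[of _ "Pow X"])
  have B: "pi_poly le \<tau> \<eta> X D = pi_poly le \<tau> \<eta> Y (mins le D)"
  proof -
    have "pi_poly le \<tau> \<eta> X D = (\<Sum>I\<in>ideals le Y. monom (phi le \<tau> \<eta> D I) (card I))"
      unfolding pi_poly_def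
      by (rule sum.mono_neutral_right[OF finI sub]) (simp add: zero)
    also have "\<dots> = pi_poly le \<tau> \<eta> Y (mins le D)"
      unfolding pi_poly_def by (rule sum.cong) (simp_all add: phiXY)
    finally show ?thesis .
  qed
  have C: "pi_poly le \<tau> \<eta> Y (mins le D) =
           (\<Sum>I\<in>ideals le Y.
              Polynomial.smult ((-1) ^ card (I \<inter> mins le D)
                 * (\<Prod>i\<in>I - maxs le I. \<tau> i) * (\<Prod>i\<in>maxs le I - mins le D. \<eta> i))
                ([:0, 1:] ^ card I))"
    unfolding pi_poly_def by (rule sum.cong) (simp_all add: phiY monom_altdef)
  show ?thesis using A B C by blast
qed

end
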